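(* For every positive integer $k$, there exist a finite simple undirected graph $G$ and an orientation $\vec{G}$ of $G$ such that $k\geq \operatorname{adim}(G)\geq\operatorname{bdim}(G)$ and $\operatorname{adim}(\vec{G})\geq\operatorname{bdim}(\vec{G})\geq 2^k$.
   Context: An orientation of $G$ is a directed graph obtained by assigning a direction to each edge of $G$. In an undirected graph, $d(u,v)$ is the shortest-path distance; in a directed graph, $d(u,v)$ is the length of a shortest directed path from $u$ to $v$; in both cases $d(u,v)=\infty$ if no such path exists. For a nonnegative integer $k$, $d_k(u,v)=\min(d(u,v),k+1)$. A function $f:V\to\mathbb{Z}_{\geq 0}$ is a resolving broadcast if for any distinct vertices $x,y$ there is $z$ with $f(z)>0$ and $d_{f(z)}(z,x)\neq d_{f(z)}(z,y)$. The broadcast dimension $\operatorname{bdim}$ is the minimum of $\sum_v f(v)$ over resolving broadcasts $f$. A set $A$ of vertices is an adjacency resolving set if for any distinct $x,y$ there is $z\in A$ with $d_1(z,x)\neq d_1(z,y)$; the adjacency dimension $\operatorname{adim}$ is the minimum cardinality of such a set. *)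

theory Defs
  imports Main "HOL-Library.Extended_Nat"
begin

definition simple_graph :: "'a set \<Rightarrow> 'a set set \<Rightarrow> bool" where
  "simple_graph V E \<longleftrightarrow> finite V \<and>
     (\<forall>e\<in>E. \<exists>u v. u \<noteq> v \<and> u \<in> V \<and> v \<in> V \<and> e = {u, v})"

definition urel :: "'a set set \<Rightarrow> ('a \<times> 'a) set" where
  "urel E = {(u, v). u \<noteq> v \<and> {u, v} \<in> E}"

definition is_orientation :: "'a set set \<Rightarrow> ('a \<times> 'a) set \<Rightarrow> bool" where
  "is_orientation E D \<longleftrightarrow>
     (\<forall>(u, v)\<in>D. {u, v} \<in> E) \<and>
     (\<forall>u v. u \<noteq> v \<and> {u, v} \<in> E \<longrightarrow> ((u, v) \<in> D \<longleftrightarrow> (v, u) \<notin> D))"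

text \<open>Shortest (directed) path distance w.r.t. an arc relation R; infinity if no path.\<close>
definition dist :: "('a \<times> 'a) set \<Rightarrow> 'a \<Rightarrow> 'a \<Rightarrow> enat" where
  "dist R u v = (INF n \<in> {n. (u, v) \<in> R ^^ n}. enat n)"

definition distk :: "('a \<times> 'a) set \<Rightarrow> nat \<Rightarrow> 'a \<Rightarrow> 'a \<Rightarrow> enat" where
  "distk R k u v = min (dist R u v) (enat (k + 1))"

definition resolving_broadcast :: "'a set \<Rightarrow> ('a \<times> 'a) set \<Rightarrow> ('a \<Rightarrow> nat) \<Rightarrow> bool" where
  "resolving_broadcast V R f \<longleftrightarrow>
     (\<forall>x\<in>V. \<forall>y\<in>V. x \<noteq> y \<longrightarrow>
        (\<exists>z\<in>V. f z > 0 \<and> distk R (f z) z x \<noteq> distk R (f z) z y))"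

definition bdim :: "'a set \<Rightarrow> ('a \<times> 'a) set \<Rightarrow> nat" where
  "bdim V R = Inf {(\<Sum>v\<in>V. f v) | f. resolving_broadcast V R f}"

definition adj_resolving :: "'a set \<Rightarrow> ('a \<times> 'a) set \<Rightarrow> 'a set \<Rightarrow> bool" where
  "adj_resolving V R A \<longleftrightarrow> A \<subseteq> V \<and>
     (\<forall>x\<in>V. \<forall>y\<in>V. x \<noteq> y \<longrightarrow> (\<exists>z\<in>A. distk R 1 z x \<noteq> distk R 1 z y))"

definition adim :: "'a set \<Rightarrow> ('a \<times> 'a) set \<Rightarrow> nat" where
  "adim V R = Inf {card A | A. adj_resolving V R A}"

end

theory Submission
  imports Defs "HOL-Library.Nat_Bijection"
begin


lemma dist_self: "dist R x x = 0"
proof -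
  have "dist R x x \<le> enat 0" unfolding dist_def by (rule INF_lower2[of 0]) auto
  thus ?thesis by (simp add: enat_0)
qed

lemma dist_ge1: assumes "x \<noteq> y" shows "dist R x y \<ge> 1"
  unfolding dist_def
proof (rule INF_greatest)
  fix n assume "n \<in> {n. (x, y) \<in> R ^^ n}"
  with assms have "n \<noteq> 0" by (cases n) auto
  thus "1 \<le> enat n" by (simp add: one_enat_def)
qed

lemma dist_ge2: assumes "x \<noteq> y" "(x,y) \<notin> R" shows "dist R x y \<ge> 2"
  unfolding dist_def
proof (rule INF_greatest)
  fix n assume "n \<in> {n. (x, y) \<in> R ^^ n}"
  hence n: "(x, y) \<in> R ^^ n" by simp
  have "n \<noteq> 0" using n assms by (cases n) auto
  moreover have "n \<noteq> 1"
  proof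
    assume "n = 1" with n assms show False by simp
  qed
  ultimately have "n \<ge> 2" by arith
  thus "2 \<le> enat n" by (simp add: numeral_eq_enat)
qed

lemma dist_one: assumes "x \<noteq> y" "(x,y) \<in> R" shows "dist R x y = 1"
proof -
  have "dist R x y \<le> enat 1" unfolding dist_def using assms by (intro INF_lower2[of 1]) auto
  thus ?thesis using dist_ge1[OF assms(1), of R] by (simp add: one_enat_def)
qed

lemma e2: "enat (1+1) = 2"
proof -
  have "(1::nat)+1 = 2" by simp
  thus ?thesis by (simp only: enat_numeral)
qed

lemma one_le_two_enat: "(1::enat) \<le> 2"
  by (metis e2 one_enat_def enat_ord_simps(1) le_add1)

lemma distk1: "distk R 1 z x = (if z = x then 0 else if (z,x) \<in> R then 1 else 2)"
proof -
  show ?thesis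
  proof (cases "z = x")
    case True thus ?thesis by (simp add: distk_def dist_self)
  next
    case False
    show ?thesis
    proof (cases "(z,x) \<in> R")
      case True
      have m: "min (1::enat) 2 = 1" by (rule min_absorb1[OF one_le_two_enat])
      show ?thesis using dist_one[OF False True] False True unfolding distk_def e2 m
        by (simp only: m if_False if_True)
    next
      case nr: False
      thus ?thesis using dist_ge2[OF False nr] False unfolding distk_def e2
        by (simp add: min_absorb2)
    qed
  qed
qed

lemma distk_self: "distk R k x x = 0"
  unfolding distk_def by (simp add: dist_self)

lemma distk_ne0: assumes "x \<noteq> y" shows "distk R k x y \<noteq> 0"
proof -
  have "(1::enat) \<le> enat (k+1)" by (simp add: one_enat_def)
  hence "1 \<le> distk R k x y" unfolding distk_def using dist_ge1[OF assms, of R] by simp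
  thus ?thesis by auto
qed

lemma twinA:
  assumes "\<And>w. (w,x) \<in> R \<longleftrightarrow> (w,y) \<in> R" "z \<noteq> x" "z \<noteq> y"
  shows "dist R z x = dist R z y"
proof -
  have "(z,x) \<in> R ^^ n \<longleftrightarrow> (z,y) \<in> R ^^ n" for n
  proof (cases n)
    case 0 thus ?thesis using assms by simp
  next
    case (Suc m)
    show ?thesis unfolding Suc using assms(1) by (auto elim!: relpow_Suc_E intro: relpow_Suc_I)
  qed
  thus ?thesis unfolding dist_def by simp
qed

lemma twinB:
  assumes "\<And>w. (w,y) \<in> R \<longleftrightarrow> (w,x) \<in> R \<or> w = x" "z \<noteq> x" "z \<noteq> y"
  shows "dist R z x = dist R z y"
proof (rule antisym)
  show "dist R z y \<le> dist R z x" unfolding dist_def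
  proof (rule INF_mono)
    fix m assume "m \<in> {n. (z, x) \<in> R ^^ n}"
    hence m: "(z,x) \<in> R ^^ m" by simp
    then obtain m' where "m = Suc m'" using assms(2) by (cases m) auto
    with m obtain w where "(z,w) \<in> R ^^ m'" "(w,x) \<in> R" by (auto elim: relpow_Suc_E)
    hence "(z,y) \<in> R ^^ m" using assms(1) \<open>m = Suc m'\<close> by (auto intro: relpow_Suc_I)
    thus "\<exists>n\<in>{n. (z, y) \<in> R ^^ n}. enat n \<le> enat m" by auto
  qed
  show "dist R z x \<le> dist R z y" unfolding dist_def
  proof (rule INF_mono)
    fix m assume "m \<in> {n. (z, y) \<in> R ^^ n}"
    hence m: "(z,y) \<in> R ^^ m" by simp
    then obtain m' where "m = Suc m'" using assms(3) by (cases m) auto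
    with m obtain w where w: "(z,w) \<in> R ^^ m'" "(w,y) \<in> R" by (auto elim: relpow_Suc_E)
    show "\<exists>n\<in>{n. (z, x) \<in> R ^^ n}. enat n \<le> enat m"
    proof (cases "w = x")
      case True thus ?thesis using w \<open>m = Suc m'\<close> by (intro bexI[of _ m']) auto
    next
      case False
      hence "(w,x) \<in> R" using assms(1) w by auto
      thus ?thesis using w \<open>m = Suc m'\<close> by (intro bexI[of _ m]) (auto intro: relpow_Suc_I)
    qed
  qed
qed

lemma adj_resolving_V: "adj_resolving V R V"
  unfolding adj_resolving_def
proof (intro conjI ballI impI)
  fix x y assume "x \<in> V" "y \<in> V" "x \<noteq> y"
  have "distk R 1 x x \<noteq> distk R 1 x y"
    using distk_self[of R 1 x] distk_ne0[OF \<open>x \<noteq> y\<close>, of R 1] by metis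
  thus "\<exists>z\<in>V. distk R 1 z x \<noteq> distk R 1 z y" using \<open>x \<in> V\<close> by blast
qed simp

lemma adim_ge_bdim:
  assumes "finite V" shows "bdim V R \<le> adim V R"
proof -
  have ne: "{card A | A. adj_resolving V R A} \<noteq> {}" using adj_resolving_V by blast
  have "adim V R \<in> {card A | A. adj_resolving V R A}"
    unfolding adim_def using ne by (rule Inf_nat_def1)
  then obtain A where A: "adj_resolving V R A" "adim V R = card A" by auto
  define f where "f = (\<lambda>v. if v \<in> A then 1 else (0::nat))"
  have "resolving_broadcast V R f"
    unfolding resolving_broadcast_def
  proof (intro ballI impI)
    fix x y assume "x \<in> V" "y \<in> V" "x \<noteq> y"
    then obtain z where z: "z \<in> A" "distk R 1 z x \<noteq> distk R 1 z y"
      using A(1) unfolding adj_resolving_def by blast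
    have "z \<in> V" using z(1) A(1) unfolding adj_resolving_def by blast
    moreover have "f z = 1" using z(1) unfolding f_def by simp
    ultimately show "\<exists>z\<in>V. 0 < f z \<and> distk R (f z) z x \<noteq> distk R (f z) z y"
      using z(2) by (intro bexI[of _ z]) simp_all
  qed
  moreover have AV: "A \<subseteq> V" using A(1) unfolding adj_resolving_def by blast
  have "(\<Sum>v\<in>V. f v) = card A"
    using AV assms unfolding f_def
    by (simp add: sum.If_cases Int_absorb1)
  ultimately have "card A \<in> {(\<Sum>v\<in>V. f v) | f. resolving_broadcast V R f}"
    by (intro CollectI exI[of _ f]) simp
  hence "bdim V R \<le> card A" unfolding bdim_def by (rule cInf_lower) simp
  thus ?thesis using A by simp
qed

lemma resolving_one: "resolving_broadcast V R (\<lambda>_. 1)"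
  unfolding resolving_broadcast_def
proof (intro ballI impI)
  fix x y assume "x \<in> V" "y \<in> V" "x \<noteq> y"
  have "distk R 1 x x \<noteq> distk R 1 x y"
    using distk_self[of R 1 x] distk_ne0[OF \<open>x \<noteq> y\<close>, of R 1] by metis
  thus "\<exists>z\<in>V. 0 < (1::nat) \<and> distk R 1 z x \<noteq> distk R 1 z y" using \<open>x \<in> V\<close> by blast
qed



definition rv :: "nat \<Rightarrow> nat" where "rv i = 2*i+1"
definition uv :: "nat set \<Rightarrow> nat" where "uv U = 2 * set_encode U"
definition dec :: "nat \<Rightarrow> nat set" where "dec n = set_decode (n div 2)"
definition cls :: "nat \<Rightarrow> nat" where
  "cls n = (if odd n then n div 2 else if dec n = {} then 0 else Max (dec n))"
definition ctr :: "nat \<Rightarrow> bool" where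
  "ctr n \<longleftrightarrow> (odd n \<and> 1 \<le> n div 2) \<or> n = uv {0}"
definition VV :: "nat \<Rightarrow> nat set" where
  "VV k = rv ` {..<k} \<union> uv ` Pow {..<k}"
definition arc :: "nat \<Rightarrow> nat \<Rightarrow> bool" where
  "arc x y \<longleftrightarrow> (ctr x \<and> \<not> ctr y \<and> cls x = cls y) \<or>
     (even x \<and> 1 \<le> cls x \<and> cls y \<in> dec x \<and> cls y < cls x)"
definition DD :: "nat \<Rightarrow> (nat \<times> nat) set" where
  "DD k = {(x,y). x \<in> VV k \<and> y \<in> VV k \<and> arc x y}"
definition EE :: "nat \<Rightarrow> nat set set" where
  "EE k = {{x,y} | x y. (x,y) \<in> DD k}"

lemma rv_odd: "odd (rv i)" by (simp add: rv_def)
lemma rv_div: "rv i div 2 = i" by (simp add: rv_def)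
lemma uv_even: "even (uv U)" by (simp add: uv_def)
lemma uv_div: "uv U div 2 = set_encode U" by (simp add: uv_def)
lemma cls_rv: "cls (rv i) = i" by (simp add: cls_def rv_odd rv_div)
lemma dec_uv: "finite U \<Longrightarrow> dec (uv U) = U" by (simp add: dec_def uv_div)
lemma cls_uv: "finite U \<Longrightarrow> cls (uv U) = (if U = {} then 0 else Max U)"
  by (simp add: cls_def uv_even dec_uv)
lemma rv_neq_uv: "rv i \<noteq> uv U" using rv_odd[of i] uv_even[of U] by metis
lemma rv_inj: "rv i = rv j \<longleftrightarrow> i = j" by (simp add: rv_def)
lemma uv_inj: "finite U \<Longrightarrow> finite W \<Longrightarrow> uv U = uv W \<longleftrightarrow> U = W"
  by (simp add: uv_def set_encode_eq)
lemma ctr_rv: "ctr (rv i) \<longleftrightarrow> 1 \<le> i"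
  by (simp add: ctr_def rv_odd rv_div rv_neq_uv)
lemma ctr_uv: "finite U \<Longrightarrow> ctr (uv U) \<longleftrightarrow> U = {0}"
  by (simp add: ctr_def uv_even uv_inj)

definition rank :: "nat \<Rightarrow> nat" where "rank n = 2 * cls n + (if ctr n then 1 else 0)"

lemma arc_rank: "arc x y \<Longrightarrow> rank y < rank x"
  unfolding arc_def rank_def by auto

lemma arc_irrefl: "\<not> arc x x" using arc_rank[of x x] by blast
lemma arc_asym: "arc x y \<Longrightarrow> \<not> arc y x" by (meson arc_rank less_asym)

lemma VV_cases [consumes 1, case_names R U]:
  assumes "x \<in> VV k"
  obtains (R) i where "i < k" "x = rv i" | (U) U where "U \<subseteq> {..<k}" "x = uv U"
  using assms unfolding VV_def by blast

lemma Max0: "finite (U::nat set) \<Longrightarrow> U \<noteq> {} \<Longrightarrow> Max U = 0 \<Longrightarrow> U = {0}"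
proof -
  assume a: "finite U" "U \<noteq> {}" "Max U = 0"
  have "\<forall>u\<in>U. u \<le> 0" using Max_ge[OF a(1)] a(3) by metis
  hence "U \<subseteq> {0}" by (metis le_zero_eq singletonI subsetI)
  thus ?thesis using a(2) by blast
qed

lemma ctr_unique:
  assumes "x \<in> VV k" "y \<in> VV k" "ctr x" "ctr y" "cls x = cls y"
  shows "x = y"
proof -
  have fin: "\<And>U. U \<subseteq> {..<k} \<Longrightarrow> finite U" using finite_subset by blast
  show ?thesis
  using assms(1) proof (cases rule: VV_cases)
    case (R i)
    show ?thesis
    using assms(2) proof (cases rule: VV_cases)
      case (R j) thus ?thesis using \<open>x = rv i\<close> assms(5) by (simp add: cls_rv)
    next
      case (U W)
      hence "W = {0}" using assms(4) ctr_uv fin by blast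
      hence "cls y = 0" using U by (simp add: cls_uv)
      moreover have "1 \<le> i" using assms(3) \<open>x = rv i\<close> ctr_rv by simp
      ultimately show ?thesis using assms(5) \<open>x = rv i\<close> by (simp add: cls_rv)
    qed
  next
    case (U U)
    hence U0: "U = {0}" using assms(3) ctr_uv fin by blast
    hence "cls x = 0" using U by (simp add: cls_uv)
    show ?thesis
    using assms(2) proof (cases rule: VV_cases)
      case (R j)
      have "1 \<le> j" using assms(4) \<open>y = rv j\<close> ctr_rv by simp
      thus ?thesis using assms(5) \<open>cls x = 0\<close> \<open>y = rv j\<close> by (simp add: cls_rv)
    next
      case (U W)
      hence "W = {0}" using assms(4) ctr_uv fin by blast
      thus ?thesis using U0 \<open>x = uv U\<close> \<open>y = uv W\<close> by simp
    qed
  qed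
qed

lemma cls_lt: assumes "x \<in> VV k" "1 \<le> k" shows "cls x < k"
using assms(1) proof (cases rule: VV_cases)
  case (R i) thus ?thesis by (simp add: cls_rv)
next
  case (U U)
  have fin: "finite U" using U(1) finite_subset by blast
  show ?thesis
  proof (cases "U = {}")
    case True thus ?thesis using U fin assms(2) by (simp add: cls_uv)
  next
    case False
    hence "Max U \<in> U" using Max_in fin by blast
    thus ?thesis using U fin False by (auto simp: cls_uv)
  qed
qed

lemma twin:
  assumes xV: "x \<in> VV k" and yV: "y \<in> VV k" and "x \<noteq> y" "cls x = cls y" "z \<noteq> x" "z \<noteq> y"
  shows "dist (DD k) z x = dist (DD k) z y"
proof -
  have B: "dist (DD k) z a = dist (DD k) z b"
    if aV: "a \<in> VV k" and bV: "b \<in> VV k" and ca: "ctr a" and cb: "\<not> ctr b"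
       and cl: "cls a = cls b" and za: "z \<noteq> a" and zb: "z \<noteq> b" for a b
  proof (rule twinB[OF _ za zb])
    fix w
    show "(w, b) \<in> DD k \<longleftrightarrow> (w, a) \<in> DD k \<or> w = a"
    proof
      assume "(w, b) \<in> DD k"
      hence w: "w \<in> VV k" "arc w b" unfolding DD_def by auto
      show "(w, a) \<in> DD k \<or> w = a"
      proof (cases "ctr w \<and> cls w = cls b")
        case True
        hence "w = a" using ctr_unique[OF w(1) aV] ca cl by simp
        thus ?thesis by simp
      next
        case False
        hence "arc w a" using w(2) cl unfolding arc_def by auto
        thus ?thesis using w(1) aV unfolding DD_def by simp
      qed
    next
      assume "(w, a) \<in> DD k \<or> w = a"
      thus "(w, b) \<in> DD k"
      proof
        assume "(w, a) \<in> DD k"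
        hence "w \<in> VV k" "arc w a" unfolding DD_def by auto
        hence "arc w b" using ca cl unfolding arc_def by auto
        thus ?thesis using \<open>w \<in> VV k\<close> bV unfolding DD_def by simp
      next
        assume "w = a"
        have "arc a b" using ca cb cl unfolding arc_def by simp
        thus ?thesis using \<open>w = a\<close> aV bV unfolding DD_def by simp
      qed
    qed
  qed
  show ?thesis
  proof (cases "ctr x")
    case cx: True
    show ?thesis
    proof (cases "ctr y")
      case True
      hence "x = y" using ctr_unique[OF xV yV cx] assms(4) by simp
      thus ?thesis using assms(3) by simp
    next
      case False
      show ?thesis using B[OF xV yV cx False assms(4) assms(5) assms(6)] .
    qed
  next
    case cx: False
    show ?thesis
    proof (cases "ctr y")
      case True
      show ?thesis using B[OF yV xV True cx _ assms(6) assms(5)] assms(4) by simp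
    next
      case False
      show ?thesis
      proof (rule twinA[OF _ assms(5) assms(6)])
        fix w
        show "(w, x) \<in> DD k \<longleftrightarrow> (w, y) \<in> DD k"
          using xV yV cx False assms(4) unfolding DD_def arc_def by auto
      qed
    qed
  qed
qed


lemma adj_rv_uv:
  assumes "finite U"
  shows "(arc (rv i) (uv U) \<or> arc (uv U) (rv i)) \<longleftrightarrow> i \<in> U"
proof (cases "U = {}")
  case True
  thus ?thesis unfolding arc_def using assms
    by (simp add: cls_uv cls_rv ctr_rv ctr_uv rv_odd uv_even dec_uv)
next
  case ne: False
  have c: "cls (uv U) = Max U" using ne assms by (simp add: cls_uv)
  have a1: "arc (rv i) (uv U) \<longleftrightarrow> (1 \<le> i \<and> U \<noteq> {0} \<and> i = Max U)"
    unfolding arc_def using assms c by (simp add: cls_rv ctr_rv ctr_uv rv_odd)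
  have a2: "arc (uv U) (rv i) \<longleftrightarrow> (U = {0} \<and> i = 0) \<or> (1 \<le> Max U \<and> i \<in> U \<and> i < Max U)"
    unfolding arc_def using assms c by (auto simp: cls_rv ctr_rv ctr_uv uv_even dec_uv)
  show ?thesis
  proof
    assume "arc (rv i) (uv U) \<or> arc (uv U) (rv i)"
    thus "i \<in> U" unfolding a1 a2 using Max_in[OF assms ne] by auto
  next
    assume iU: "i \<in> U"
    have le: "i \<le> Max U" using Max_ge[OF assms iU] .
    show "arc (rv i) (uv U) \<or> arc (uv U) (rv i)"
    proof (cases "i = Max U")
      case True
      show ?thesis
      proof (cases "i = 0")
        case True
        hence "U = {0}" using Max0[OF assms ne] \<open>i = Max U\<close> by simp
        thus ?thesis unfolding a2 using True by simp
      next
        case False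
        hence "U \<noteq> {0}" using \<open>i = Max U\<close> by auto
        thus ?thesis unfolding a1 using False \<open>i = Max U\<close> by simp
      qed
    next
      case False
      thus ?thesis unfolding a2 using iU le by simp
    qed
  qed
qed

lemma EE_iff: "{u,v} \<in> EE k \<longleftrightarrow> (u,v) \<in> DD k \<or> (v,u) \<in> DD k"
  unfolding EE_def by (auto simp: doubleton_eq_iff)

lemma urel_iff: "(u,v) \<in> urel (EE k) \<longleftrightarrow> u \<noteq> v \<and> ((u,v) \<in> DD k \<or> (v,u) \<in> DD k)"
  unfolding urel_def using EE_iff by simp

lemma finite_VV: "finite (VV k)" unfolding VV_def by simp

lemma card_VV: "card (VV k) = k + 2^k"
proof -
  have fin: "\<And>U. U \<in> Pow {..<k} \<Longrightarrow> finite U" using finite_subset by blast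
  have i1: "inj_on rv {..<k}" by (simp add: inj_on_def rv_inj)
  have i2: "inj_on uv (Pow {..<k})"
  proof (rule inj_onI)
    fix U W assume "U \<in> Pow {..<k}" "W \<in> Pow {..<k}" "uv U = uv W"
    thus "U = W" using uv_inj[OF fin fin] by metis
  qed
  have d: "rv ` {..<k} \<inter> uv ` Pow {..<k} = {}"
  proof (rule equals0I)
    fix x assume "x \<in> rv ` {..<k} \<inter> uv ` Pow {..<k}"
    then obtain i U where "x = rv i" "x = uv U" by blast
    thus False using rv_neq_uv by metis
  qed
  have "card (VV k) = card (rv ` {..<k}) + card (uv ` Pow {..<k})"
    unfolding VV_def by (rule card_Un_disjoint) (simp_all add: d)
  also have "\<dots> = k + 2^k" using card_image[OF i1] card_image[OF i2] by (simp add: card_Pow)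
  finally show ?thesis .
qed

lemma simple_VV: "simple_graph (VV k) (EE k)"
  unfolding simple_graph_def
proof (intro conjI finite_VV ballI)
  fix e assume "e \<in> EE k"
  then obtain x y where "e = {x,y}" "(x,y) \<in> DD k" unfolding EE_def by blast
  moreover hence "x \<noteq> y" unfolding DD_def using arc_irrefl by auto
  ultimately show "\<exists>u v. u \<noteq> v \<and> u \<in> VV k \<and> v \<in> VV k \<and> e = {u, v}"
    unfolding DD_def by blast
qed

lemma orient_VV: "is_orientation (EE k) (DD k)"
  unfolding is_orientation_def
proof (intro conjI allI impI)
  show "\<forall>(u, v)\<in>DD k. {u, v} \<in> EE k" using EE_iff by blast
next
  fix u v assume "u \<noteq> v \<and> {u, v} \<in> EE k"
  hence "(u,v) \<in> DD k \<or> (v,u) \<in> DD k" using EE_iff by blast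
  moreover have "\<not> ((u,v) \<in> DD k \<and> (v,u) \<in> DD k)" unfolding DD_def using arc_asym by blast
  ultimately show "(u, v) \<in> DD k \<longleftrightarrow> (v, u) \<notin> DD k" by blast
qed

lemma adim_G: "adim (VV k) (urel (EE k)) \<le> k"
proof -
  let ?R = "rv ` {..<k}"
  have "adj_resolving (VV k) (urel (EE k)) ?R"
    unfolding adj_resolving_def
  proof (intro conjI ballI impI)
    show "?R \<subseteq> VV k" unfolding VV_def by blast
  next
    fix x y assume xV: "x \<in> VV k" and yV: "y \<in> VV k" and xy: "x \<noteq> y"
    show "\<exists>z\<in>?R. distk (urel (EE k)) 1 z x \<noteq> distk (urel (EE k)) 1 z y"
    proof (cases "x \<in> ?R")
      case True
      have "distk (urel (EE k)) 1 x x \<noteq> distk (urel (EE k)) 1 x y"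
        using distk_self[of "urel (EE k)" 1 x] distk_ne0[OF xy, of "urel (EE k)" 1] by metis
      thus ?thesis using True by blast
    next
      case xR: False
      show ?thesis
      proof (cases "y \<in> ?R")
        case True
        have "distk (urel (EE k)) 1 y y \<noteq> distk (urel (EE k)) 1 y x"
          using distk_self[of "urel (EE k)" 1 y] distk_ne0[of y x "urel (EE k)" 1] xy by metis
        hence "distk (urel (EE k)) 1 y x \<noteq> distk (urel (EE k)) 1 y y" by (rule not_sym)
        thus ?thesis using True by blast
      next
        case yR: False
        obtain U where U: "U \<subseteq> {..<k}" "x = uv U" using xV xR unfolding VV_def by blast
        obtain W where W: "W \<subseteq> {..<k}" "y = uv W" using yV yR unfolding VV_def by blast
        have fU: "finite U" using U(1) finite_subset by blast
        have fW: "finite W" using W(1) finite_subset by blast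
        have "U \<noteq> W" using xy U W by blast
        then obtain i where i: "(i \<in> U) \<noteq> (i \<in> W)" by blast
        hence ik: "i < k" using U(1) W(1) by blast
        have rV: "rv i \<in> VV k" using ik unfolding VV_def by blast
        have adj: "\<And>Z. finite Z \<Longrightarrow> uv Z \<in> VV k \<Longrightarrow>
            (rv i, uv Z) \<in> urel (EE k) \<longleftrightarrow> i \<in> Z"
          using adj_rv_uv rV rv_neq_uv unfolding urel_iff DD_def by auto
        have dx: "distk (urel (EE k)) 1 (rv i) x = (if i \<in> U then 1 else 2)"
          unfolding distk1 using adj[OF fU] xV U(2) rv_neq_uv by simp
        have dy: "distk (urel (EE k)) 1 (rv i) y = (if i \<in> W then 1 else 2)"
          unfolding distk1 using adj[OF fW] yV W(2) rv_neq_uv by simp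
        have "(1::enat) \<noteq> 2"
        proof
          assume "(1::enat) = 2"
          hence "enat 1 = enat (1+1)" using e2 by (simp only: one_enat_def)
          thus False by simp
        qed
        hence "distk (urel (EE k)) 1 (rv i) x \<noteq> distk (urel (EE k)) 1 (rv i) y"
          unfolding dx dy using i by auto
        thus ?thesis using ik by blast
      qed
    qed
  qed
  hence "card ?R \<in> {card A | A. adj_resolving (VV k) (urel (EE k)) A}" by blast
  hence "adim (VV k) (urel (EE k)) \<le> card ?R" unfolding adim_def by (rule cInf_lower) simp
  also have "card ?R = k" by (simp add: card_image inj_on_def rv_inj)
  finally show ?thesis .
qed

lemma bdim_D: assumes "1 \<le> k" shows "2^k \<le> bdim (VV k) (DD k)"
  unfolding bdim_def
proof (rule cInf_greatest)
  show "{\<Sum>v\<in>VV k. f v |f. resolving_broadcast (VV k) (DD k) f} \<noteq> {}"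
    using resolving_one by blast
next
  fix s assume "s \<in> {\<Sum>v\<in>VV k. f v |f. resolving_broadcast (VV k) (DD k) f}"
  then obtain f where s: "s = (\<Sum>v\<in>VV k. f v)" and f: "resolving_broadcast (VV k) (DD k) f" by blast
  define Z where "Z = {v \<in> VV k. f v = 0}"
  have inj: "inj_on cls Z"
  proof (rule inj_onI)
    fix x y assume xZ: "x \<in> Z" and yZ: "y \<in> Z" and c: "cls x = cls y"
    show "x = y"
    proof (rule ccontr)
      assume xy: "x \<noteq> y"
      have xV: "x \<in> VV k" "f x = 0" using xZ Z_def by auto
      have yV: "y \<in> VV k" "f y = 0" using yZ Z_def by auto
      obtain z where z: "z \<in> VV k" "f z > 0" "distk (DD k) (f z) z x \<noteq> distk (DD k) (f z) z y"
        using f xV yV xy unfolding resolving_broadcast_def by blast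
      have "z \<noteq> x" "z \<noteq> y" using z(2) xV yV by auto
      hence "dist (DD k) z x = dist (DD k) z y" using twin[OF xV(1) yV(1) xy c] by blast
      thus False using z(3) unfolding distk_def by simp
    qed
  qed
  have "cls ` Z \<subseteq> {..<k}"
  proof
    fix c assume "c \<in> cls ` Z"
    then obtain v where "v \<in> VV k" "c = cls v" unfolding Z_def by blast
    thus "c \<in> {..<k}" using cls_lt[OF _ assms] by simp
  qed
  hence "card Z \<le> card {..<k::nat}" by (rule card_inj_on_le[OF inj]) simp
  hence cZ: "card Z \<le> k" by simp
  have ZV: "Z \<subseteq> VV k" unfolding Z_def by blast
  have "card (VV k - Z) = card (VV k) - card Z"
    using card_Diff_subset[OF finite_subset[OF ZV finite_VV] ZV] .
  hence c2: "2^k \<le> card (VV k - Z)" using cZ card_VV[of k] by simp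
  have "card (VV k - Z) = (\<Sum>v\<in>VV k - Z. 1)" by simp
  also have "\<dots> \<le> (\<Sum>v\<in>VV k - Z. f v)"
    by (rule sum_mono) (auto simp: Z_def)
  also have "\<dots> \<le> (\<Sum>v\<in>VV k. f v)"
    by (rule sum_mono2[OF finite_VV]) auto
  finally show "2^k \<le> s" using c2 s by simp
qed

theorem theorem5p3:
  fixes k :: nat
  assumes "k \<ge> 1"
  shows "\<exists>(V :: nat set) E D. simple_graph V E \<and> is_orientation E D \<and>
           k \<ge> adim V (urel E) \<and> adim V (urel E) \<ge> bdim V (urel E) \<and>
           adim V D \<ge> bdim V D \<and> bdim V D \<ge> 2 ^ k"
  apply (rule exI[of _ "VV k"], rule exI[of _ "EE k"], rule exI[of _ "DD k"])
  apply (intro conjI simple_VV orient_VV adim_G adim_ge_bdim finite_VV bdim_D assms)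
  done

end
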